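(* Let $Y$ and $X$ be real-valued square integrable random variables on a common probability space. Then: (a) $\iota_X(Y)=\sqrt{\operatorname{Var}[E(Y\mid X)]}$; (b) $\iota_X(Y)=0$ if and only if $E(Y\mid X)=E(Y)$ (almost surely), i.e. $E(Y\mid X)$ does not depend on $X$; (c) $0\le \iota_X(Y)\le \iota_Y(Y)=\operatorname{SD}(Y)$, where $\operatorname{SD}(Y)=\sqrt{\operatorname{Var}(Y)}$; (d) $\iota_X(Y)=\iota_Y(Y)$ if and only if $Y$ depends on $X$ deterministically, i.e. $Y=g(X)$ (almost surely) for a measurable function $g:\mathbb{R}\to\mathbb{R}$; (e) if $Y=g(X)+U$ where $g:\mathbb{R}\to\mathbb{R}$ is measurable and $U$ and $X$ are stochastically independent, then $\iota_X(Y)=\iota_X[g(X)]=\operatorname{SD}[g(X)]$.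
   Context: For square integrable real random variables $Y$ and $Z$ on a common probability space, the mean impact of $Z$ on $Y$ is $$\iota_Z(Y)=\sup\{E[Y\delta(Z)] : \delta \text{ measurable},\ \delta(Z)\in L^2,\ E[\delta(Z)]=0,\ E[\delta^2(Z)]=1\}.$$ In particular $\iota_X(Y)$ uses $Z=X$ and $\iota_Y(Y)$ uses $Z=Y$. *)

theory Defs
  imports "HOL-Probability.Probability"
begin

text \<open>Mean impact of Z on Y: supremum of E[Y delta(Z)] over measurable delta with
  delta(Z) square integrable, E[delta(Z)] = 0 and E[delta(Z)^2] = 1.
  Convention: the supremum of the empty set (Z a.s. constant) is 0.\<close>
definition mean_impact :: "'a measure \<Rightarrow> ('a \<Rightarrow> real) \<Rightarrow> ('a \<Rightarrow> real) \<Rightarrow> real" where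
  "mean_impact M Z Y =
    (let S = {(\<integral>x. Y x * \<delta> (Z x) \<partial>M) | \<delta>.
               \<delta> \<in> borel_measurable borel \<and>
               integrable M (\<lambda>x. (\<delta> (Z x))\<^sup>2) \<and>
               (\<integral>x. \<delta> (Z x) \<partial>M) = 0 \<and>
               (\<integral>x. (\<delta> (Z x))\<^sup>2 \<partial>M) = 1}
     in if S = {} then 0 else Sup S)"

definition cond_exp_given :: "'a measure \<Rightarrow> ('a \<Rightarrow> real) \<Rightarrow> ('a \<Rightarrow> real) \<Rightarrow> 'a \<Rightarrow> real" where
  "cond_exp_given M X Y = real_cond_exp M (vimage_algebra (space M) X borel) Y"

end

theory Submission imports Defs begin

lemma factor_ennreal:
  fixes u :: "'a \<Rightarrow> ennreal"
  assumes X: "X \<in> space M \<rightarrow> space N"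
    and u: "u \<in> borel_measurable (vimage_algebra (space M) X N)"
  shows "\<exists>h \<in> borel_measurable N. \<forall>w\<in>space M. u w = h (X w)"
  using u
proof (induction rule: borel_measurable_induct)
  case (cong f g)
  then show ?case by fastforce
next
  case (set A)
  then obtain B where B: "B \<in> sets N" "A = X -` B \<inter> space M"
    using sets_vimage_algebra2[OF X] by auto
  show ?case
    by (rule bexI[of _ "indicator B"]) (use B X in \<open>auto simp: indicator_def\<close>)
next
  case (mult u c)
  then obtain h where "h \<in> borel_measurable N" "\<forall>w\<in>space M. u w = h (X w)" by blast
  then show ?case by (intro bexI[of _ "\<lambda>t. c * h t"]) auto
next
  case (add u v)
  then obtain h where "h \<in> borel_measurable N" "\<forall>w\<in>space M. u w = h (X w)" by blast
  moreover obtain k where "k \<in> borel_measurable N" "\<forall>w\<in>space M. v w = k (X w)" using add by blast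
  ultimately show ?case by (intro bexI[of _ "\<lambda>t. k t + h t"]) auto
next
  case (seq U)
  then obtain H where H: "\<And>i. H i \<in> borel_measurable N" "\<And>i. \<forall>w\<in>space M. U i w = H i (X w)"
    by metis
  show ?case
  proof (rule bexI[of _ "\<lambda>t. SUP i. H i t"])
    show "\<forall>w\<in>space M. (SUP i. U i) w = (SUP i. H i (X w))"
    proof
      fix w assume "w \<in> space M"
      then have "\<forall>i. U i w = H i (X w)" using H by auto
      then show "(SUP i. U i) w = (SUP i. H i (X w))" by (simp add: SUP_apply image_comp)
    qed
  qed (rule borel_measurable_SUP, simp, rule H)
qed

lemma enn2real_ennreal_max: "enn2real (ennreal x) = max 0 x"
  by (cases "0 \<le> x") (auto simp: ennreal_neg)

lemma factor_real:
  fixes f :: "'a \<Rightarrow> real"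
  assumes X: "X \<in> space M \<rightarrow> space N"
    and f: "f \<in> borel_measurable (vimage_algebra (space M) X N)"
  shows "\<exists>h \<in> borel_measurable N. \<forall>w\<in>space M. f w = h (X w)"
proof -
  have "(\<lambda>w. ennreal (f w)) \<in> borel_measurable (vimage_algebra (space M) X N)" using f by auto
  from factor_ennreal[OF X this] obtain h where h: "h \<in> borel_measurable N" "\<forall>w\<in>space M. ennreal (f w) = h (X w)" by blast
  have "(\<lambda>w. ennreal (- f w)) \<in> borel_measurable (vimage_algebra (space M) X N)" using f by auto
  from factor_ennreal[OF X this] obtain k where k: "k \<in> borel_measurable N" "\<forall>w\<in>space M. ennreal (- f w) = k (X w)" by blast
  show ?thesis
  proof (rule bexI[of _ "\<lambda>t. enn2real (h t) - enn2real (k t)"])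
    show "\<forall>w\<in>space M. f w = enn2real (h (X w)) - enn2real (k (X w))"
    proof
      fix w assume "w \<in> space M"
      then have "enn2real (h (X w)) = max 0 (f w)" "enn2real (k (X w)) = max 0 (- f w)"
        using h k by (metis enn2real_ennreal_max)+
      then show "f w = enn2real (h (X w)) - enn2real (k (X w))" by linarith
    qed
  qed (use h k in measurable)
qed


lemma L2_prod:
  fixes f g :: "'a \<Rightarrow> real"
  assumes "f \<in> borel_measurable M" "g \<in> borel_measurable M"
    "integrable M (\<lambda>x. (f x)^2)" "integrable M (\<lambda>x. (g x)^2)"
  shows "integrable M (\<lambda>x. f x * g x)"
proof (rule Bochner_Integration.integrable_bound[of M "\<lambda>x. (f x)^2 + (g x)^2"])
  show "integrable M (\<lambda>x. (f x)^2 + (g x)^2)" using assms by auto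
  show "(\<lambda>x. f x * g x) \<in> borel_measurable M" using assms by auto
  show "AE x in M. norm (f x * g x) \<le> norm ((f x)^2 + (g x)^2)"
  proof (rule AE_I2)
    fix x
    have "0 \<le> (\<bar>f x\<bar> - \<bar>g x\<bar>)^2" by simp
    then have "2 * (\<bar>f x\<bar> * \<bar>g x\<bar>) \<le> (f x)^2 + (g x)^2"
      by (simp add: power2_diff mult.assoc)
    moreover have "0 \<le> \<bar>f x\<bar> * \<bar>g x\<bar>" by simp
    moreover have "\<bar>(f x)^2 + (g x)^2\<bar> = (f x)^2 + (g x)^2" by simp
    ultimately show "norm (f x * g x) \<le> norm ((f x)^2 + (g x)^2)"
      unfolding real_norm_def abs_mult by linarith
  qed
qed

lemma vimage_sfs:
  assumes "prob_space M" "X \<in> borel_measurable M"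
  shows "sigma_finite_subalgebra M (vimage_algebra (space M) X (borel :: real measure))"
proof -
  interpret prob_space M by fact
  have "subalgebra M (vimage_algebra (space M) X borel)"
    unfolding subalgebra_def using sets_image_in_sets[OF refl assms(2)] by simp
  then have "finite_measure_subalgebra M (vimage_algebra (space M) X borel)"
    by (simp add: finite_measure_axioms finite_measure_subalgebra_axioms.intro finite_measure_subalgebra_def)
  then show ?thesis by (rule finite_measure_subalgebra_is_sigma_finite)
qed


lemma mean_impact_formula:
  fixes X Y :: "'a \<Rightarrow> real"
  assumes P: "prob_space M" and X[measurable]: "X \<in> borel_measurable M"
    and Y[measurable]: "Y \<in> borel_measurable M" and Y2: "integrable M (\<lambda>x. (Y x)^2)"
  shows "mean_impact M X Y = sqrt (prob_space.variance M (cond_exp_given M X Y))"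
proof -
  interpret prob_space M by (rule P)
  define F where "F = vimage_algebra (space M) X (borel :: real measure)"
  interpret sigma_finite_subalgebra M F unfolding F_def by (rule vimage_sfs[OF P X])
  define C where "C = real_cond_exp M F Y"
  have Ceq: "cond_exp_given M X Y = C" unfolding cond_exp_given_def C_def F_def ..
  have YI: "integrable M Y" by (rule square_integrable_imp_integrable[OF Y Y2])
  have CF[measurable]: "C \<in> borel_measurable F" and CM[measurable]: "C \<in> borel_measurable M"
    unfolding C_def by auto
  have XF[measurable]: "X \<in> measurable F borel"
    unfolding F_def by (rule measurable_vimage_algebra1) simp
  have C2: "integrable M (\<lambda>x. (C x)^2)"
    unfolding C_def
    by (rule integrable_convex_cond_exp[OF YI, of UNIV, where q="\<lambda>x. x^2"])
       (use Y2 convex_power2 in auto)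
  have CI: "integrable M C" by (rule square_integrable_imp_integrable[OF CM C2])
  have EC: "expectation C = expectation Y" unfolding C_def by (rule real_cond_exp_int(2)[OF YI])
  define \<mu> where "\<mu> = expectation Y"
  define D where "D x = C x - \<mu>" for x
  have DM[measurable]: "D \<in> borel_measurable M" unfolding D_def by simp
  have D2: "integrable M (\<lambda>x. (D x)^2)"
    unfolding D_def power2_diff using C2 CI by auto
  have DI: "integrable M D" unfolding D_def using CI by auto
  have ED: "(\<integral>x. D x \<partial>M) = 0" unfolding D_def using CI EC \<mu>_def by (simp add: prob_space)
  define v where "v = (\<integral>x. (D x)^2 \<partial>M)"
  have var: "variance C = v" unfolding v_def D_def EC \<mu>_def ..
  have v0: "0 \<le> v" unfolding v_def by simp
  define s where "s = sqrt v"
  have key: "(\<integral>x. Y x * \<delta> (X x) \<partial>M) = (\<integral>x. \<delta> (X x) * D x \<partial>M)"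
    if d[measurable]: "\<delta> \<in> borel_measurable borel" and d2: "integrable M (\<lambda>x. (\<delta> (X x))\<^sup>2)"
      and d0: "(\<integral>x. \<delta> (X x) \<partial>M) = 0" for \<delta>
  proof -
    have dF[measurable]: "(\<lambda>x. \<delta> (X x)) \<in> borel_measurable F" by measurable
    have dM[measurable]: "(\<lambda>x. \<delta> (X x)) \<in> borel_measurable M" by measurable
    have dY: "integrable M (\<lambda>x. \<delta> (X x) * Y x)" by (rule L2_prod[OF dM Y d2 Y2])
    have dI: "integrable M (\<lambda>x. \<delta> (X x))" by (rule square_integrable_imp_integrable[OF dM d2])
    have dD: "integrable M (\<lambda>x. \<delta> (X x) * D x)" by (rule L2_prod[OF dM DM d2 D2])
    have "(\<integral>x. Y x * \<delta> (X x) \<partial>M) = (\<integral>x. \<delta> (X x) * Y x \<partial>M)" by (simp add: mult.commute)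
    also have "\<dots> = (\<integral>x. \<delta> (X x) * C x \<partial>M)"
      unfolding C_def by (rule real_cond_exp_intg(2)[OF dY dF Y, symmetric])
    also have "\<dots> = (\<integral>x. \<delta> (X x) * D x + \<mu> * \<delta> (X x) \<partial>M)"
      unfolding D_def by (simp add: algebra_simps)
    also have "\<dots> = (\<integral>x. \<delta> (X x) * D x \<partial>M) + \<mu> * (\<integral>x. \<delta> (X x) \<partial>M)"
      using dD dI by simp
    finally show ?thesis using d0 by simp
  qed
  have bound: "(\<integral>x. \<delta> (X x) * D x \<partial>M) \<le> s \<and> (v = 0 \<longrightarrow> (\<integral>x. \<delta> (X x) * D x \<partial>M) = 0)"
    if d[measurable]: "\<delta> \<in> borel_measurable borel" and d2: "integrable M (\<lambda>x. (\<delta> (X x))\<^sup>2)"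
      and d1: "(\<integral>x. (\<delta> (X x))\<^sup>2 \<partial>M) = 1" for \<delta>
  proof (cases "v = 0")
    case True
    have "AE x in M. (D x)^2 = 0"
      using integral_nonneg_eq_0_iff_AE[OF D2] True unfolding v_def by simp
    then have "AE x in M. \<delta> (X x) * D x = 0" by eventually_elim simp
    then have "(\<integral>x. \<delta> (X x) * D x \<partial>M) = 0" by (simp add: integral_cong_AE[where g="\<lambda>_. 0"])
    then show ?thesis using True s_def by simp
  next
    case False
    then have sp: "0 < s" using v0 s_def by simp
    have ss: "s * s = v" using v0 s_def by simp
    have dM[measurable]: "(\<lambda>x. \<delta> (X x)) \<in> borel_measurable M" by measurable
    have dD: "integrable M (\<lambda>x. \<delta> (X x) * D x)" by (rule L2_prod[OF dM DM d2 D2])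
    have pt: "\<delta> (X x) * D x \<le> ((D x)^2 / s + s * (\<delta> (X x))^2) / 2" for x
    proof -
      have "0 \<le> (D x - s * \<delta> (X x))^2" by simp
      then have "2 * s * (\<delta> (X x) * D x) \<le> (D x)^2 + s * (s * (\<delta> (X x))^2)"
        by (simp add: power2_diff power_mult_distrib algebra_simps power2_eq_square)
      then show ?thesis using sp by (simp add: field_simps)
    qed
    have "(\<integral>x. \<delta> (X x) * D x \<partial>M) \<le> (\<integral>x. ((D x)^2 / s + s * (\<delta> (X x))^2) / 2 \<partial>M)"
      by (rule integral_mono[OF dD]) (use D2 d2 pt in auto)
    also have "\<dots> = (v / s + s) / 2"
      using D2 d2 d1 unfolding v_def by simp
    also have "\<dots> = s" using sp ss by (simp add: field_simps)
    finally show ?thesis using False by simp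
  qed
  define S where "S = {(\<integral>x. Y x * \<delta> (X x) \<partial>M) | \<delta>.
               \<delta> \<in> borel_measurable borel \<and>
               integrable M (\<lambda>x. (\<delta> (X x))\<^sup>2) \<and>
               (\<integral>x. \<delta> (X x) \<partial>M) = 0 \<and>
               (\<integral>x. (\<delta> (X x))\<^sup>2 \<partial>M) = 1}"
  have mi: "mean_impact M X Y = (if S = {} then 0 else Sup S)"
    unfolding mean_impact_def S_def Let_def ..
  have ub: "z \<le> s \<and> (v = 0 \<longrightarrow> z = 0)" if zS: "z \<in> S" for z
  proof -
    have "\<exists>\<delta>. z = (\<integral>x. Y x * \<delta> (X x) \<partial>M) \<and> \<delta> \<in> borel_measurable borel \<and> integrable M (\<lambda>x. (\<delta> (X x))\<^sup>2) \<and>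
      (\<integral>x. \<delta> (X x) \<partial>M) = 0 \<and> (\<integral>x. (\<delta> (X x))\<^sup>2 \<partial>M) = 1"
      using zS unfolding S_def by (simp only: mem_Collect_eq)
    then obtain \<delta> where z: "z = (\<integral>x. Y x * \<delta> (X x) \<partial>M)" and d: "\<delta> \<in> borel_measurable borel" "integrable M (\<lambda>x. (\<delta> (X x))\<^sup>2)"
      "(\<integral>x. \<delta> (X x) \<partial>M) = 0" "(\<integral>x. (\<delta> (X x))\<^sup>2 \<partial>M) = 1"
      by (elim exE conjE)
    have e: "z = (\<integral>x. \<delta> (X x) * D x \<partial>M)" using z key[OF d(1,2,3)] by (rule trans)
    show ?thesis unfolding e by (rule bound[OF d(1,2,4)])
  qed
  show ?thesis
  proof (cases "v = 0")
    case True
    then have "S \<subseteq> {0}" using ub by blast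
    then have "S = {} \<or> S = {0}" by auto
    then show ?thesis using mi Ceq var True by auto
  next
    case False
    then have sp: "0 < s" using v0 s_def by simp
    have ss: "s * s = v" using v0 s_def by simp
    have Xs: "X \<in> space M \<rightarrow> space (borel :: real measure)" by simp
    have CF': "C \<in> borel_measurable (vimage_algebra (space M) X borel)" using CF unfolding F_def .
    obtain h where h[measurable]: "h \<in> borel_measurable borel" and hC: "\<forall>w\<in>space M. C w = h (X w)"
      using factor_real[OF Xs CF'] by (elim bexE)
    define \<delta> where "\<delta> t = (h t - \<mu>) / s" for t
    have dX: "\<delta> (X w) = D w / s" if "w \<in> space M" for w
      unfolding \<delta>_def D_def using hC that by simp
    have d[measurable]: "\<delta> \<in> borel_measurable borel" unfolding \<delta>_def by measurable
    have d2: "integrable M (\<lambda>x. (\<delta> (X x))\<^sup>2)"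
    proof -
      have "integrable M (\<lambda>x. (D x)^2 / s^2)" using D2 by simp
      moreover have "\<And>x. x \<in> space M \<Longrightarrow> (D x)^2/s^2 = (\<delta> (X x))^2" using dX by (simp add: power_divide)
      ultimately show ?thesis using Bochner_Integration.integrable_cong[of M M "\<lambda>x. (D x)^2/s^2" "\<lambda>x. (\<delta> (X x))^2"] by simp
    qed
    have d0: "(\<integral>x. \<delta> (X x) \<partial>M) = 0"
    proof -
      have "(\<integral>x. \<delta> (X x) \<partial>M) = (\<integral>x. D x / s \<partial>M)"
        by (rule Bochner_Integration.integral_cong) (auto simp: dX)
      then show ?thesis using ED by simp
    qed
    have d1: "(\<integral>x. (\<delta> (X x))\<^sup>2 \<partial>M) = 1"
    proof -
      have "(\<integral>x. (\<delta> (X x))\<^sup>2 \<partial>M) = (\<integral>x. (D x)^2 / s^2 \<partial>M)"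
        by (rule Bochner_Integration.integral_cong) (auto simp: dX power_divide)
      also have "\<dots> = v / s^2" unfolding v_def by simp
      also have "\<dots> = 1" using ss sp False by (simp add: power2_eq_square)
      finally show ?thesis .
    qed
    have "(\<integral>x. Y x * \<delta> (X x) \<partial>M) = (\<integral>x. \<delta> (X x) * D x \<partial>M)" by (rule key[OF d d2 d0])
    also have "\<dots> = (\<integral>x. (D x)^2 / s \<partial>M)"
      by (rule Bochner_Integration.integral_cong) (auto simp: dX power2_eq_square)
    also have "\<dots> = v / s" unfolding v_def by simp
    also have "\<dots> = s" using ss sp by (simp add: field_simps)
    finally have "s \<in> S" unfolding S_def using d d2 d0 d1 by blast
    then have "Sup S = s" using ub by (intro cSup_eq_maximum) (blast, simp)
    then show ?thesis using mi \<open>s \<in> S\<close> Ceq var s_def by (simp add: ex_in_conv[symmetric]) blast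
  qed
qed


lemma cond_props:
  fixes X Y :: "'a \<Rightarrow> real"
  assumes P: "prob_space M" and X[measurable]: "X \<in> borel_measurable M"
    and Y[measurable]: "Y \<in> borel_measurable M" and Y2: "integrable M (\<lambda>x. (Y x)^2)"
  defines "C \<equiv> cond_exp_given M X Y"
  shows "C \<in> borel_measurable M"
    and "prob_space.variance M C = 0 \<longleftrightarrow> (AE x in M. C x = prob_space.expectation M Y)"
    and "prob_space.variance M C \<le> prob_space.variance M Y"
    and "prob_space.variance M C = prob_space.variance M Y \<longleftrightarrow> (AE x in M. Y x = C x)"
    and "\<exists>h \<in> borel_measurable borel. \<forall>w\<in>space M. C w = h (X w)"
proof -
  interpret prob_space M by (rule P)
  define F where "F = vimage_algebra (space M) X (borel :: real measure)"
  interpret sigma_finite_subalgebra M F unfolding F_def by (rule vimage_sfs[OF P X])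
  have Cdef: "C = real_cond_exp M F Y" unfolding C_def cond_exp_given_def F_def ..
  have YI: "integrable M Y" by (rule square_integrable_imp_integrable[OF Y Y2])
  have CF[measurable]: "C \<in> borel_measurable F" and CM[measurable]: "C \<in> borel_measurable M"
    unfolding Cdef by auto
  then show "C \<in> borel_measurable M" by simp
  have C2: "integrable M (\<lambda>x. (C x)^2)"
    unfolding Cdef
    by (rule integrable_convex_cond_exp[OF YI, of UNIV, where q="\<lambda>x. x^2"])
       (use Y2 convex_power2 in auto)
  have CI: "integrable M C" by (rule square_integrable_imp_integrable[OF CM C2])
  have EC: "expectation C = expectation Y" unfolding Cdef by (rule real_cond_exp_int(2)[OF YI])
  have CY: "integrable M (\<lambda>x. C x * Y x)" by (rule L2_prod[OF CM Y C2 Y2])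
  have ECC: "(\<integral>x. C x * C x \<partial>M) = (\<integral>x. C x * Y x \<partial>M)"
    unfolding Cdef[symmetric] using real_cond_exp_intg(2)[OF CY CF Y] unfolding Cdef .
  define \<mu> where "\<mu> = expectation Y"
  have D2: "integrable M (\<lambda>x. (C x - \<mu>)^2)"
    unfolding power2_diff using C2 CI by auto
  have "variance C = (\<integral>x. (C x - \<mu>)^2 \<partial>M)" unfolding EC \<mu>_def ..
  then have "variance C = 0 \<longleftrightarrow> (AE x in M. (C x - \<mu>)^2 = 0)"
    using integral_nonneg_eq_0_iff_AE[OF D2] by simp
  also have "\<dots> \<longleftrightarrow> (AE x in M. C x = \<mu>)" by simp
  finally show "variance C = 0 \<longleftrightarrow> (AE x in M. C x = expectation Y)" unfolding \<mu>_def .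
  have eqE: "(\<lambda>x. (Y x - C x)^2) = (\<lambda>x. (Y x)^2 - 2 * (C x * Y x) + (C x)^2)"
    by (auto simp: fun_eq_iff power2_diff algebra_simps)
  have "integrable M (\<lambda>x. (Y x)^2 - 2 * (C x * Y x) + (C x)^2)" using C2 Y2 CY by auto
  then have E2: "integrable M (\<lambda>x. (Y x - C x)^2)" by (simp only: eqE)
  have "(\<integral>x. (Y x - C x)^2 \<partial>M) = (\<integral>x. (Y x)^2 - 2 * (C x * Y x) + (C x)^2 \<partial>M)"
    by (simp add: power2_diff algebra_simps)
  also have "\<dots> = (\<integral>x. (Y x)^2 \<partial>M) - 2 * (\<integral>x. C x * Y x \<partial>M) + (\<integral>x. (C x)^2 \<partial>M)"
    using C2 Y2 CY by simp
  also have "\<dots> = (\<integral>x. (Y x)^2 \<partial>M) - (\<integral>x. (C x)^2 \<partial>M)"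
    using ECC by (simp add: power2_eq_square)
  also have "\<dots> = variance Y - variance C"
    using variance_eq[OF YI Y2] variance_eq[OF CI C2] EC by simp
  finally have diff: "(\<integral>x. (Y x - C x)^2 \<partial>M) = variance Y - variance C" .
  have "0 \<le> (\<integral>x. (Y x - C x)^2 \<partial>M)" by simp
  then show "variance C \<le> variance Y" using diff by simp
  have "variance C = variance Y \<longleftrightarrow> (\<integral>x. (Y x - C x)^2 \<partial>M) = 0" using diff by linarith
  also have "\<dots> \<longleftrightarrow> (AE x in M. (Y x - C x)^2 = 0)"
    using integral_nonneg_eq_0_iff_AE[OF E2] by simp
  also have "\<dots> \<longleftrightarrow> (AE x in M. Y x = C x)" by simp
  finally show "variance C = variance Y \<longleftrightarrow> (AE x in M. Y x = C x)" .
  have Xs: "X \<in> space M \<rightarrow> space (borel :: real measure)" by simp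
  have CF': "C \<in> borel_measurable (vimage_algebra (space M) X borel)" using CF unfolding F_def .
  show "\<exists>h \<in> borel_measurable borel. \<forall>w\<in>space M. C w = h (X w)"
    by (rule factor_real[OF Xs CF'])
qed

lemma cond_self:
  fixes Z G :: "'a \<Rightarrow> real"
  assumes P: "prob_space M" and Z: "Z \<in> borel_measurable M" and GI: "integrable M G"
    and GF: "G \<in> borel_measurable (vimage_algebra (space M) Z borel)"
  shows "AE x in M. cond_exp_given M Z G x = G x"
proof -
  interpret sigma_finite_subalgebra M "vimage_algebra (space M) Z borel" by (rule vimage_sfs[OF P Z])
  show ?thesis unfolding cond_exp_given_def by (rule real_cond_exp_F_meas[OF GI GF])
qed

lemma cond_cong:
  fixes Z G Y :: "'a \<Rightarrow> real"
  assumes P: "prob_space M" and Z: "Z \<in> borel_measurable M" and "G \<in> borel_measurable M" "Y \<in> borel_measurable M"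
    and "AE x in M. Y x = G x"
  shows "AE x in M. cond_exp_given M Z Y x = cond_exp_given M Z G x"
proof -
  interpret sigma_finite_subalgebra M "vimage_algebra (space M) Z borel" by (rule vimage_sfs[OF P Z])
  show ?thesis unfolding cond_exp_given_def by (rule real_cond_exp_cong) (use assms in auto)
qed

lemma var_AE:
  fixes f g :: "'a \<Rightarrow> real"
  assumes P: "prob_space M" and [measurable]: "f \<in> borel_measurable M" "g \<in> borel_measurable M"
    and ae: "AE x in M. f x = g x"
  shows "prob_space.variance M f = prob_space.variance M g"
proof -
  interpret prob_space M by (rule P)
  have e: "expectation f = expectation g" by (rule integral_cong_AE) (use ae in auto)
  show ?thesis unfolding e by (rule integral_cong_AE) (use ae in auto)
qed


lemma indep_L2:
  fixes X U :: "'a \<Rightarrow> real" and g :: "real \<Rightarrow> real"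
  assumes P: "prob_space M" and X[measurable]: "X \<in> borel_measurable M"
    and U[measurable]: "U \<in> borel_measurable M" and g[measurable]: "g \<in> borel_measurable borel"
    and ind: "prob_space.indep_var M borel X borel U"
    and Y2: "integrable M (\<lambda>x. (g (X x) + U x)^2)"
  shows "integrable M (\<lambda>x. (U x)^2)"
proof -
  interpret prob_space M by (rule P)
  define PX where "PX = distr M borel X"
  define PU where "PU = distr M borel U"
  have PXp: "prob_space PX" unfolding PX_def by (rule prob_space_distr) simp
  have PUp: "prob_space PU" unfolding PU_def by (rule prob_space_distr) simp
  interpret PU: sigma_finite_measure PU by (rule prob_space_imp_sigma_finite[OF PUp])
  interpret PX: prob_space PX by (rule PXp)
  define f where "f p = ennreal ((g (fst p) + snd p)^2)" for p :: "real \<times> real"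
  have fm[measurable]: "f \<in> borel_measurable (borel \<Otimes>\<^sub>M borel)" unfolding f_def by measurable
  have sPP: "sets (PX \<Otimes>\<^sub>M PU) = sets (borel \<Otimes>\<^sub>M (borel :: real measure))"
    unfolding PX_def PU_def by (rule sets_pair_measure_cong) simp_all
  have fm': "f \<in> borel_measurable (PX \<Otimes>\<^sub>M PU)"
    unfolding measurable_cong_sets[OF sPP refl] by (rule fm)
  have eqd: "PX \<Otimes>\<^sub>M PU = distr M (borel \<Otimes>\<^sub>M borel) (\<lambda>x. (X x, U x))"
    using ind unfolding indep_var_distribution_eq PX_def PU_def by simp
  have "(\<integral>\<^sup>+ x. ennreal ((g (X x) + U x)^2) \<partial>M) \<noteq> \<infinity>"
    using integrableD(2)[OF Y2] .
  also have "(\<integral>\<^sup>+ x. ennreal ((g (X x) + U x)^2) \<partial>M) = integral\<^sup>N (distr M (borel \<Otimes>\<^sub>M borel) (\<lambda>x. (X x, U x))) f"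
    by (subst nn_integral_distr) (auto simp: f_def)
  also have "\<dots> = integral\<^sup>N (PX \<Otimes>\<^sub>M PU) f" unfolding eqd ..
  also have "\<dots> = (\<integral>\<^sup>+ x. \<integral>\<^sup>+ y. f (x, y) \<partial>PU \<partial>PX)" by (rule PU.nn_integral_fst[OF fm', symmetric])
  finally have fin: "(\<integral>\<^sup>+ x. \<integral>\<^sup>+ y. f (x, y) \<partial>PU \<partial>PX) \<noteq> \<infinity>" .
  have "AE x in PX. (\<integral>\<^sup>+ y. f (x, y) \<partial>PU) \<noteq> \<infinity>"
    by (rule nn_integral_PInf_AE[OF PU.borel_measurable_nn_integral_fst[OF fm'] fin])
  then obtain x0 where x0: "(\<integral>\<^sup>+ y. f (x0, y) \<partial>PU) \<noteq> \<infinity>"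
  proof -
    assume *: "\<And>x0. (\<integral>\<^sup>+ y. f (x0, y) \<partial>PU) \<noteq> \<infinity> \<Longrightarrow> thesis"
    show thesis
    proof (rule ccontr)
      assume "\<not> thesis"
      then have "\<forall>x. (\<integral>\<^sup>+ y. f (x, y) \<partial>PU) = \<infinity>" using * by blast
      then have "AE x in PX. False" using \<open>AE x in PX. _\<close> by simp
      then show False using PX.AE_False by simp
    qed
  qed
  define c where "c = g x0"
  have fx0: "(\<lambda>y. f (x0, y)) = (\<lambda>y. ennreal ((c + y)^2))" by (simp add: f_def c_def)
  have m1: "(\<lambda>y. f (x0, y)) \<in> borel_measurable (distr M borel U)"
    unfolding measurable_cong_sets[OF sets_distr refl] fx0 by measurable
  have "(\<integral>\<^sup>+ y. f (x0, y) \<partial>PU) = (\<integral>\<^sup>+ w. f (x0, U w) \<partial>M)"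
    unfolding PU_def by (rule nn_integral_distr[OF U m1])
  also have "\<dots> = (\<integral>\<^sup>+ w. ennreal ((c + U w)^2) \<partial>M)" by (simp add: f_def c_def)
  finally have "(\<integral>\<^sup>+ y. f (x0, y) \<partial>PU) = (\<integral>\<^sup>+ w. ennreal ((c + U w)^2) \<partial>M)" .
  then have fin2: "(\<integral>\<^sup>+ w. ennreal ((c + U w)^2) \<partial>M) < \<infinity>" using x0 by (simp add: top.not_eq_extremum)
  have W2: "integrable M (\<lambda>w. (c + U w)^2)"
    by (rule integrableI_nonneg) (use fin2 in auto)
  have WI: "integrable M (\<lambda>w. c + U w)"
    by (rule square_integrable_imp_integrable[OF _ W2]) simp
  have eqU: "(\<lambda>w. (U w)^2) = (\<lambda>w. (c + U w)^2 - 2 * c * (c + U w) + c^2)"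
    by (auto simp: fun_eq_iff power2_sum algebra_simps power2_eq_square)
  have "integrable M (\<lambda>w. (c + U w)^2 - 2 * c * (c + U w) + c^2)"
    using W2 WI by auto
  then show ?thesis by (simp only: eqU)
qed

lemma set_cong_aux: "(\<And>d. P d \<Longrightarrow> f d = g d) \<Longrightarrow> {f d | d. P d} = {g d | d. P d}"
  by (rule Collect_cong, rule ex_cong1) auto

lemma mean_impact_cong:
  assumes "\<And>\<delta>. \<delta> \<in> borel_measurable borel \<Longrightarrow> integrable M (\<lambda>x. (\<delta> (Z x))\<^sup>2) \<Longrightarrow>
      (\<integral>x. \<delta> (Z x) \<partial>M) = 0 \<Longrightarrow> (\<integral>x. (\<delta> (Z x))\<^sup>2 \<partial>M) = 1 \<Longrightarrow>
      (\<integral>x. Y x * \<delta> (Z x) \<partial>M) = (\<integral>x. G x * \<delta> (Z x) \<partial>M)"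
  shows "mean_impact M Z Y = mean_impact M Z G"
proof -
  have "{(\<integral>x. Y x * \<delta> (Z x) \<partial>M) | \<delta>.
               \<delta> \<in> borel_measurable borel \<and>
               integrable M (\<lambda>x. (\<delta> (Z x))\<^sup>2) \<and>
               (\<integral>x. \<delta> (Z x) \<partial>M) = 0 \<and>
               (\<integral>x. (\<delta> (Z x))\<^sup>2 \<partial>M) = 1} =
        {(\<integral>x. G x * \<delta> (Z x) \<partial>M) | \<delta>.
               \<delta> \<in> borel_measurable borel \<and>
               integrable M (\<lambda>x. (\<delta> (Z x))\<^sup>2) \<and>
               (\<integral>x. \<delta> (Z x) \<partial>M) = 0 \<and>
               (\<integral>x. (\<delta> (Z x))\<^sup>2 \<partial>M) = 1}"
    apply (rule set_cong_aux)
    apply (elim conjE)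
    apply (rule assms)
       apply assumption+
    done
  then show ?thesis unfolding mean_impact_def by simp
qed

theorem theorem1:
  fixes M :: "'a measure" and X Y :: "'a \<Rightarrow> real"
  assumes "prob_space M"
    and "X \<in> borel_measurable M" and "Y \<in> borel_measurable M"
    and "integrable M (\<lambda>x. (X x)\<^sup>2)" and "integrable M (\<lambda>x. (Y x)\<^sup>2)"
  shows "(mean_impact M X Y = sqrt (prob_space.variance M (cond_exp_given M X Y)))
    \<and> (mean_impact M X Y = 0 \<longleftrightarrow>
           (AE x in M. cond_exp_given M X Y x = prob_space.expectation M Y))
    \<and> (0 \<le> mean_impact M X Y \<and> mean_impact M X Y \<le> mean_impact M Y Y
           \<and> mean_impact M Y Y = sqrt (prob_space.variance M Y))
    \<and> (mean_impact M X Y = mean_impact M Y Y \<longleftrightarrow>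
           (\<exists>g \<in> borel_measurable (borel :: real measure). AE x in M. Y x = g (X x)))
    \<and> (\<forall>g U. g \<in> borel_measurable (borel :: real measure) \<longrightarrow> U \<in> borel_measurable M \<longrightarrow>
           prob_space.indep_var M borel X borel U \<longrightarrow>
           (\<forall>x \<in> space M. Y x = g (X x) + U x) \<longrightarrow>
           (mean_impact M X Y = mean_impact M X (\<lambda>x. g (X x)) \<and>
            mean_impact M X (\<lambda>x. g (X x)) = sqrt (prob_space.variance M (\<lambda>x. g (X x)))))"
proof -
  interpret prob_space M by (rule assms(1))
  note P = assms(1)
  note X[measurable] = assms(2)
  note Y[measurable] = assms(3)
  note Y2 = assms(5)
  define C where "C = cond_exp_given M X Y"
  have A: "mean_impact M X Y = sqrt (variance C)"
    using mean_impact_formula[OF P X Y Y2] unfolding C_def .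
  note cp = cond_props[OF P X Y Y2, folded C_def]
  have CM[measurable]: "C \<in> borel_measurable M" by (rule cp(1))
  have YI: "integrable M Y" by (rule square_integrable_imp_integrable[OF Y Y2])
  have YYF: "Y \<in> borel_measurable (vimage_algebra (space M) Y borel)"
    by (rule measurable_vimage_algebra1) simp
  have AY: "mean_impact M Y Y = sqrt (variance Y)"
  proof -
    have ae: "AE x in M. cond_exp_given M Y Y x = Y x" by (rule cond_self[OF P Y YI YYF])
    have cm: "cond_exp_given M Y Y \<in> borel_measurable M" by (rule cond_props(1)[OF P Y Y Y2])
    have "variance (cond_exp_given M Y Y) = variance Y" by (rule var_AE[OF P cm Y ae])
    then show ?thesis using mean_impact_formula[OF P Y Y Y2] by simp
  qed
  have v0: "0 \<le> variance C" by (rule variance_positive)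
  have part_b: "mean_impact M X Y = 0 \<longleftrightarrow> (AE x in M. C x = expectation Y)"
    using A cp(2) v0 by simp
  have part_c: "0 \<le> mean_impact M X Y \<and> mean_impact M X Y \<le> mean_impact M Y Y
           \<and> mean_impact M Y Y = sqrt (variance Y)"
    using A AY cp(3) by simp
  have part_d: "mean_impact M X Y = mean_impact M Y Y \<longleftrightarrow>
           (\<exists>g \<in> borel_measurable (borel :: real measure). AE x in M. Y x = g (X x))"
  proof -
    have vY: "0 \<le> variance Y" by (rule variance_positive)
    have "mean_impact M X Y = mean_impact M Y Y \<longleftrightarrow> variance C = variance Y"
      using A AY v0 vY by simp
    also have "\<dots> \<longleftrightarrow> (AE x in M. Y x = C x)" by (rule cp(4))
    also have "\<dots> \<longleftrightarrow> (\<exists>g \<in> borel_measurable (borel :: real measure). AE x in M. Y x = g (X x))"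
    proof
      assume ae: "AE x in M. Y x = C x"
      obtain h where h: "h \<in> borel_measurable borel" "\<forall>w\<in>space M. C w = h (X w)"
        using cp(5) by (elim bexE)
      have "AE x in M. Y x = h (X x)"
        using ae AE_space by eventually_elim (use h(2) in simp)
      then show "\<exists>g \<in> borel_measurable (borel :: real measure). AE x in M. Y x = g (X x)"
        using h(1) by blast
    next
      assume "\<exists>g \<in> borel_measurable (borel :: real measure). AE x in M. Y x = g (X x)"
      then obtain g where g[measurable]: "g \<in> borel_measurable (borel :: real measure)"
        and ae: "AE x in M. Y x = g (X x)" by (elim bexE)
      define G where "G = (\<lambda>x. g (X x))"
      have GM[measurable]: "G \<in> borel_measurable M" unfolding G_def by measurable
      have GF: "G \<in> borel_measurable (vimage_algebra (space M) X borel)"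
        unfolding G_def by (rule measurable_compose[OF measurable_vimage_algebra1 g]) simp
      have GI: "integrable M G"
        using integrable_cong_AE[OF Y GM] ae YI unfolding G_def by simp
      have 1: "AE x in M. C x = cond_exp_given M X G x"
        unfolding C_def by (rule cond_cong[OF P X GM Y]) (use ae in \<open>simp add: G_def\<close>)
      have 2: "AE x in M. cond_exp_given M X G x = G x" by (rule cond_self[OF P X GI GF])
      show "AE x in M. Y x = C x" using ae 1 2 by eventually_elim (simp add: G_def)
    qed
    finally show ?thesis .
  qed
  have part_e: "\<forall>g U. g \<in> borel_measurable (borel :: real measure) \<longrightarrow> U \<in> borel_measurable M \<longrightarrow>
           indep_var borel X borel U \<longrightarrow>
           (\<forall>x \<in> space M. Y x = g (X x) + U x) \<longrightarrow>
           (mean_impact M X Y = mean_impact M X (\<lambda>x. g (X x)) \<and>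
            mean_impact M X (\<lambda>x. g (X x)) = sqrt (variance (\<lambda>x. g (X x))))"
  proof (intro allI impI)
    fix g :: "real \<Rightarrow> real" and U :: "'a \<Rightarrow> real"
    assume g[measurable]: "g \<in> borel_measurable borel" and U[measurable]: "U \<in> borel_measurable M"
      and ind: "indep_var borel X borel U" and eq: "\<forall>x \<in> space M. Y x = g (X x) + U x"
    define G where "G = (\<lambda>x. g (X x))"
    have GM[measurable]: "G \<in> borel_measurable M" unfolding G_def by measurable
    have GF: "G \<in> borel_measurable (vimage_algebra (space M) X borel)"
      unfolding G_def by (rule measurable_compose[OF measurable_vimage_algebra1 g]) simp
    have YYsq: "integrable M (\<lambda>x. (g (X x) + U x)^2)"
      using Y2 Bochner_Integration.integrable_cong[of M M "\<lambda>x. (Y x)^2" "\<lambda>x. (g (X x) + U x)^2"] eq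
      by simp
    have U2: "integrable M (\<lambda>x. (U x)^2)" by (rule indep_L2[OF P X U g ind YYsq])
    have UI: "integrable M U" by (rule square_integrable_imp_integrable[OF U U2])
    have YU: "integrable M (\<lambda>x. Y x * U x)" by (rule L2_prod[OF Y U Y2 U2])
    have G2: "integrable M (\<lambda>x. (G x)^2)"
    proof -
      have "integrable M (\<lambda>x. (Y x)^2 - 2 * (Y x * U x) + (U x)^2)" using Y2 YU U2 by auto
      moreover have "\<And>x. x \<in> space M \<Longrightarrow> (Y x)^2 - 2 * (Y x * U x) + (U x)^2 = (G x)^2"
        using eq unfolding G_def by (auto simp: power2_eq_square algebra_simps)
      ultimately show ?thesis
        using Bochner_Integration.integrable_cong[of M M "\<lambda>x. (Y x)^2 - 2 * (Y x * U x) + (U x)^2" "\<lambda>x. (G x)^2"]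
        by simp
    qed
    have GI: "integrable M G" by (rule square_integrable_imp_integrable[OF GM G2])
    have MI1: "mean_impact M X Y = mean_impact M X G"
    proof (rule mean_impact_cong)
      fix \<delta> :: "real \<Rightarrow> real"
      assume d[measurable]: "\<delta> \<in> borel_measurable borel" and d2: "integrable M (\<lambda>x. (\<delta> (X x))\<^sup>2)"
        and d0: "(\<integral>x. \<delta> (X x) \<partial>M) = 0"
      have dM[measurable]: "(\<lambda>x. \<delta> (X x)) \<in> borel_measurable M" by measurable
      have dI: "integrable M (\<lambda>x. \<delta> (X x))" by (rule square_integrable_imp_integrable[OF dM d2])
      have indd: "indep_var borel (\<delta> \<circ> X) borel (id \<circ> U)"
        by (rule indep_var_compose[OF ind d measurable_ident])
      have indd': "indep_var borel (\<lambda>x. \<delta> (X x)) borel U"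
        using indd by (simp add: comp_def id_def)
      have "(\<integral>x. \<delta> (X x) * U x \<partial>M) = (\<integral>x. \<delta> (X x) \<partial>M) * (\<integral>x. U x \<partial>M)"
        by (rule indep_var_lebesgue_integral[OF indd' dI UI])
      then have U0: "(\<integral>x. U x * \<delta> (X x) \<partial>M) = 0" using d0 by (simp add: mult.commute)
      have GdI: "integrable M (\<lambda>x. G x * \<delta> (X x))" by (rule L2_prod[OF GM dM G2 d2])
      have UdI: "integrable M (\<lambda>x. U x * \<delta> (X x))" by (rule L2_prod[OF U dM U2 d2])
      have "(\<integral>x. Y x * \<delta> (X x) \<partial>M) = (\<integral>x. G x * \<delta> (X x) + U x * \<delta> (X x) \<partial>M)"
        by (rule Bochner_Integration.integral_cong) (use eq in \<open>auto simp: G_def algebra_simps\<close>)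
      also have "\<dots> = (\<integral>x. G x * \<delta> (X x) \<partial>M) + (\<integral>x. U x * \<delta> (X x) \<partial>M)"
        by (rule Bochner_Integration.integral_add[OF GdI UdI])
      finally show "(\<integral>x. Y x * \<delta> (X x) \<partial>M) = (\<integral>x. G x * \<delta> (X x) \<partial>M)" using U0 by simp
    qed
    have MI2: "mean_impact M X G = sqrt (variance G)"
    proof -
      have ae: "AE x in M. cond_exp_given M X G x = G x" by (rule cond_self[OF P X GI GF])
      have cm: "cond_exp_given M X G \<in> borel_measurable M" by (rule cond_props(1)[OF P X GM G2])
      have "variance (cond_exp_given M X G) = variance G" by (rule var_AE[OF P cm GM ae])
      then show ?thesis using mean_impact_formula[OF P X GM G2] by simp
    qed
    show "mean_impact M X Y = mean_impact M X (\<lambda>x. g (X x)) \<and>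
            mean_impact M X (\<lambda>x. g (X x)) = sqrt (variance (\<lambda>x. g (X x)))"
      using MI1 MI2 unfolding G_def by simp
  qed
  show ?thesis
    unfolding C_def[symmetric]
    using A part_b part_c[THEN conjunct1] part_c[THEN conjunct2, THEN conjunct1]
      part_c[THEN conjunct2, THEN conjunct2] part_d part_e by (intro conjI) assumption+
qed

end
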